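(* Let $k$ be an infinite Brauer field and let $d\ge 1$ be an integer that is not a multiple of the characteristic of $k$. There exists a constant $C(d)$ (depending on $d$ and $k$) such that every equation $a_1x_1^d+\cdots+a_nx_n^d=1$ with $a_1,\ldots,a_n\in k$ all nonzero and $n\ge C(d)$ has a solution $(x_1,\ldots,x_n)\in k^n$.
   Context: A field $k$ is a Brauer field if for every $d\ge 1$ there is a number $N_k(d)$ such that every equation $b_1y_1^d+\cdots+b_my_m^d=0$ with $m>N_k(d)$ and $b_i\in k$ has a non-trivial solution in $k^m$. *)

theory Defs
  imports Main
begin

definition brauer_field :: "'k::field itself \<Rightarrow> bool" where
  "brauer_field _ \<longleftrightarrow>
     (\<forall>d::nat. d \<ge> 1 \<longrightarrow> (\<exists>N::nat. \<forall>m>N. \<forall>b::nat \<Rightarrow> 'k.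
        \<exists>y::nat \<Rightarrow> 'k. (\<exists>i<m. y i \<noteq> 0) \<and> (\<Sum>i<m. b i * y i ^ d) = 0))"

end

theory Submission
  imports Defs "HOL-Computational_Algebra.Polynomial"
begin

lemma sum_blocks:
  fixes g :: "nat \<Rightarrow> 'a::comm_monoid_add"
  shows "(\<Sum>k<M*C. g k) = (\<Sum>\<gamma><M. \<Sum>i<C. g (\<gamma>*C+i))"
proof (induction M)
  case 0
  then show ?case by simp
next
  case (Suc M)
  have "(\<Sum>k<Suc M*C. g k) = (\<Sum>k\<in>{0..<M*C}. g k) + (\<Sum>k\<in>{M*C..<M*C+C}. g k)"
    by (simp add: lessThan_atLeast0 sum.atLeastLessThan_concat add.commute)
  also have "(\<Sum>k\<in>{M*C..<M*C+C}. g k) = (\<Sum>i<C. g (M*C+i))"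
    using sum.shift_bounds_nat_ivl[of g 0 "M*C" C]
    by (simp add: lessThan_atLeast0 add.commute)
  finally show ?case using Suc by (simp add: lessThan_atLeast0)
qed

lemma key:
  fixes d :: nat
  assumes B: "brauer_field TYPE('k::field)" and inf: "infinite (UNIV::'k set)" and d: "d \<ge> 1"
  shows "j \<le> d - 1 \<Longrightarrow> \<exists>C. \<forall>a::nat \<Rightarrow> 'k. (\<forall>i<C. a i \<noteq> 0) \<longrightarrow>
     (\<exists>y \<tau>. (\<forall>e<j. (\<Sum>i<C. a i * y i ^ d * \<tau> i ^ e) = 0) \<and> (\<Sum>i<C. a i * y i ^ d * \<tau> i ^ (d-1)) \<noteq> 0)"
proof (induction j)
  case 0
  show ?case
    by (rule exI[of _ 1]) (auto intro!: exI[of _ "\<lambda>_. 1"])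
next
  case (Suc j)
  then have jd: "j < d - 1" by simp
  from Suc.IH jd obtain C where IH: "\<forall>a::nat\<Rightarrow>'k. (\<forall>i<C. a i \<noteq> 0) \<longrightarrow>
     (\<exists>y \<tau>. (\<forall>e<j. (\<Sum>i<C. a i * y i ^ d * \<tau> i ^ e) = 0) \<and> (\<Sum>i<C. a i * y i ^ d * \<tau> i ^ (d-1)) \<noteq> 0)"
    by auto
  from B d obtain N where N: "\<forall>m>N. \<forall>b::nat\<Rightarrow>'k. \<exists>y. (\<exists>i<m. y i \<noteq> 0) \<and> (\<Sum>i<m. b i * y i ^ d) = 0"
    unfolding brauer_field_def by blast
  define M where "M = Suc N"
  show ?case
  proof (rule exI[of _ "M*C"], intro allI impI)
    fix a :: "nat \<Rightarrow> 'k" assume a: "\<forall>i<M*C. a i \<noteq> 0"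
    have "\<forall>\<gamma>\<in>{..<M}. \<exists>y \<tau>. (\<forall>e<j. (\<Sum>i<C. a (\<gamma>*C+i) * y i ^ d * \<tau> i ^ e) = 0) \<and>
        (\<Sum>i<C. a (\<gamma>*C+i) * y i ^ d * \<tau> i ^ (d-1)) \<noteq> 0"
    proof
      fix \<gamma> assume "\<gamma> \<in> {..<M}"
      then have "Suc \<gamma> \<le> M" by simp
      then have "Suc \<gamma> * C \<le> M * C" by (rule mult_le_mono1)
      then have "\<forall>i<C. a (\<gamma>*C+i) \<noteq> 0" using a by auto
      then show "\<exists>y \<tau>. (\<forall>e<j. (\<Sum>i<C. a (\<gamma>*C+i) * y i ^ d * \<tau> i ^ e) = 0) \<and>
        (\<Sum>i<C. a (\<gamma>*C+i) * y i ^ d * \<tau> i ^ (d-1)) \<noteq> 0"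
        using IH[rule_format, of "\<lambda>i. a (\<gamma>*C+i)"] by simp
    qed
    then obtain Y where "\<forall>\<gamma>\<in>{..<M}. \<exists>\<tau>. (\<forall>e<j. (\<Sum>i<C. a (\<gamma>*C+i) * Y \<gamma> i ^ d * \<tau> i ^ e) = 0) \<and>
        (\<Sum>i<C. a (\<gamma>*C+i) * Y \<gamma> i ^ d * \<tau> i ^ (d-1)) \<noteq> 0"
      by (rule bchoice[elim_format]) blast
    then obtain T where YT: "\<forall>\<gamma>\<in>{..<M}. (\<forall>e<j. (\<Sum>i<C. a (\<gamma>*C+i) * Y \<gamma> i ^ d * T \<gamma> i ^ e) = 0) \<and>
        (\<Sum>i<C. a (\<gamma>*C+i) * Y \<gamma> i ^ d * T \<gamma> i ^ (d-1)) \<noteq> 0"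
      by (rule bchoice[elim_format]) blast
    define mom where "mom \<gamma> e = (\<Sum>i<C. a (\<gamma>*C+i) * Y \<gamma> i ^ d * T \<gamma> i ^ e)" for \<gamma> e
    have mom0: "mom \<gamma> e = 0" if "\<gamma> < M" "e < j" for \<gamma> e
      using YT that unfolding mom_def by auto
    have momnz: "mom \<gamma> (d-1) \<noteq> 0" if "\<gamma> < M" for \<gamma>
      using YT that unfolding mom_def by auto
    obtain s where s0: "\<exists>i<M. s i \<noteq> 0" and s: "(\<Sum>\<gamma><M. mom \<gamma> j * s \<gamma> ^ d) = 0"
      using N[rule_format, of M "\<lambda>\<gamma>. mom \<gamma> j"] M_def by auto
    obtain \<gamma>0 where g0: "\<gamma>0 < M" "s \<gamma>0 \<noteq> 0" using s0 by auto
    define A where "A = (\<Sum>\<gamma>\<in>{..<M}-{\<gamma>0}. s \<gamma> ^ d * mom \<gamma> (d-1))"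
    define Bc where "Bc = s \<gamma>0 ^ d * mom \<gamma>0 (d-1)"
    have Bnz: "Bc \<noteq> 0" using g0 momnz unfolding Bc_def by simp
    define K where "K = d*(d-1) - j*d"
    have K: "K \<ge> 1" "d*(d-1) = j*d + K"
    proof -
      have "d-1 = j + (d-1-j)" using jd by simp
      then have "d*(d-1) = d*j + d*(d-1-j)" by (metis add_mult_distrib2)
      moreover have "d*(d-1-j) \<ge> 1" using jd d by simp
      ultimately show "K \<ge> 1" "d*(d-1) = j*d + K" unfolding K_def by (simp_all add: mult.commute)
    qed
    define p where "p = [:A:] + monom Bc K"
    have "coeff p K = Bc" using K(1) unfolding p_def by (cases K) (auto simp: coeff_monom)
    then have "p \<noteq> 0" using Bnz by auto
    then have fin: "finite ({0} \<union> {x. poly p x = 0})" using poly_roots_finite by auto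
    obtain \<rho> where "\<rho> \<notin> {0} \<union> {x. poly p x = 0}" using ex_new_if_finite[OF inf fin] by blast
    then have rho: "\<rho> \<noteq> 0" "A + Bc * \<rho> ^ K \<noteq> 0" unfolding p_def by (auto simp: poly_monom)
    define \<sigma> where "\<sigma> \<gamma> = (if \<gamma> = \<gamma>0 then s \<gamma> else s \<gamma> * \<rho> ^ j)" for \<gamma>
    define \<theta> where "\<theta> \<gamma> = (if \<gamma> = \<gamma>0 then \<rho> ^ d else 1)" for \<gamma>
    define y' where "y' k = \<sigma> (k div C) * Y (k div C) (k mod C)" for k
    define \<tau>' where "\<tau>' k = \<theta> (k div C) * T (k div C) (k mod C)" for k
    have mom': "(\<Sum>k<M*C. a k * y' k ^ d * \<tau>' k ^ e) = (\<Sum>\<gamma><M. \<sigma> \<gamma> ^ d * \<theta> \<gamma> ^ e * mom \<gamma> e)" for e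
    proof -
      have "(\<Sum>k<M*C. a k * y' k ^ d * \<tau>' k ^ e) = (\<Sum>\<gamma><M. \<Sum>i<C. a (\<gamma>*C+i) * y' (\<gamma>*C+i) ^ d * \<tau>' (\<gamma>*C+i) ^ e)"
        by (rule sum_blocks)
      also have "\<dots> = (\<Sum>\<gamma><M. \<sigma> \<gamma> ^ d * \<theta> \<gamma> ^ e * mom \<gamma> e)"
        unfolding mom_def sum_distrib_left
      proof (intro sum.cong refl)
        fix \<gamma> i assume "i \<in> {..<C}"
        then have "(\<gamma>*C+i) div C = \<gamma>" "(\<gamma>*C+i) mod C = i" by auto
        then show "a (\<gamma>*C+i) * y' (\<gamma>*C+i) ^ d * \<tau>' (\<gamma>*C+i) ^ e =
          \<sigma> \<gamma> ^ d * \<theta> \<gamma> ^ e * (a (\<gamma> * C + i) * Y \<gamma> i ^ d * T \<gamma> i ^ e)"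
          unfolding y'_def \<tau>'_def by (simp add: power_mult_distrib algebra_simps)
      qed
      finally show ?thesis .
    qed
    have coef_j: "\<sigma> \<gamma> ^ d * \<theta> \<gamma> ^ j = \<rho> ^ (j*d) * s \<gamma> ^ d" for \<gamma>
      unfolding \<sigma>_def \<theta>_def by (auto simp: power_mult_distrib power_mult[symmetric] mult.commute)
    have coef_d: "\<sigma> \<gamma> ^ d * \<theta> \<gamma> ^ (d-1) = (if \<gamma> = \<gamma>0 then \<rho> ^ (j*d) * \<rho> ^ K * s \<gamma> ^ d else \<rho> ^ (j*d) * s \<gamma> ^ d)" for \<gamma>
      unfolding \<sigma>_def \<theta>_def using K(2)
      by (auto simp: power_mult_distrib power_mult[symmetric] mult.commute power_add[symmetric] add.commute)
    show "\<exists>y \<tau>. (\<forall>e<Suc j. (\<Sum>i<M*C. a i * y i ^ d * \<tau> i ^ e) = 0) \<and> (\<Sum>i<M*C. a i * y i ^ d * \<tau> i ^ (d-1)) \<noteq> 0"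
    proof (intro exI conjI allI impI)
      fix e assume "e < Suc j"
      then consider "e < j" | "e = j" by linarith
      then show "(\<Sum>i<M*C. a i * y' i ^ d * \<tau>' i ^ e) = 0"
      proof cases
        case 1 then show ?thesis unfolding mom' using mom0 by simp
      next
        case 2
        have "(\<Sum>\<gamma><M. \<sigma> \<gamma> ^ d * \<theta> \<gamma> ^ j * mom \<gamma> j) = \<rho> ^ (j*d) * (\<Sum>\<gamma><M. mom \<gamma> j * s \<gamma> ^ d)"
          unfolding coef_j sum_distrib_left by (simp add: algebra_simps)
        then show ?thesis unfolding mom' 2 s by simp
      qed
    next
      have "(\<Sum>\<gamma><M. \<sigma> \<gamma> ^ d * \<theta> \<gamma> ^ (d-1) * mom \<gamma> (d-1)) = 
         \<sigma> \<gamma>0 ^ d * \<theta> \<gamma>0 ^ (d-1) * mom \<gamma>0 (d-1) + (\<Sum>\<gamma>\<in>{..<M}-{\<gamma>0}. \<sigma> \<gamma> ^ d * \<theta> \<gamma> ^ (d-1) * mom \<gamma> (d-1))"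
        using g0 by (simp add: sum.remove)
      also have "(\<Sum>\<gamma>\<in>{..<M}-{\<gamma>0}. \<sigma> \<gamma> ^ d * \<theta> \<gamma> ^ (d-1) * mom \<gamma> (d-1)) = \<rho> ^ (j*d) * A"
        unfolding A_def sum_distrib_left by (intro sum.cong refl) (auto simp: coef_d[simplified])
      also have "\<sigma> \<gamma>0 ^ d * \<theta> \<gamma>0 ^ (d-1) * mom \<gamma>0 (d-1) = \<rho> ^ (j*d) * (Bc * \<rho> ^ K)"
        unfolding coef_d Bc_def by simp
      finally have "(\<Sum>\<gamma><M. \<sigma> \<gamma> ^ d * \<theta> \<gamma> ^ (d-1) * mom \<gamma> (d-1)) = \<rho> ^ (j*d) * (A + Bc * \<rho> ^ K)"
        by (simp add: algebra_simps)
      then show "(\<Sum>i<M*C. a i * y' i ^ d * \<tau>' i ^ (d-1)) \<noteq> 0"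
        unfolding mom' using rho by simp
    qed
  qed
qed

theorem corollary1p5:
  assumes "brauer_field TYPE('k::field)"
    and "infinite (UNIV :: 'k set)"
    and "d \<ge> (1::nat)"
    and "\<not> CHAR('k) dvd d"
  shows "\<exists>C::nat. \<forall>n\<ge>C. \<forall>a::nat \<Rightarrow> 'k. (\<forall>i<n. a i \<noteq> 0) \<longrightarrow>
           (\<exists>x::nat \<Rightarrow> 'k. (\<Sum>i<n. a i * x i ^ d) = 1)"
proof -
  obtain C where HC: "\<forall>a::nat \<Rightarrow> 'k. (\<forall>i<C. a i \<noteq> 0) \<longrightarrow>
     (\<exists>y \<tau>. (\<forall>e<d-1. (\<Sum>i<C. a i * y i ^ d * \<tau> i ^ e) = 0) \<and> (\<Sum>i<C. a i * y i ^ d * \<tau> i ^ (d-1)) \<noteq> 0)"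
    using key[OF assms(1,2,3), of "d-1"] by auto
  have dnz: "(of_nat d :: 'k) \<noteq> 0" using assms(4) by (simp add: of_nat_eq_0_iff_char_dvd)
  obtain d' where d': "d = Suc d'" using assms(3) by (cases d) auto
  show ?thesis
  proof (rule exI[of _ C], intro allI impI)
    fix n and a :: "nat \<Rightarrow> 'k" assume n: "C \<le> n" and a: "\<forall>i<n. a i \<noteq> 0"
    then have "\<forall>i<C. a i \<noteq> 0" by auto
    then obtain y \<tau> where z: "\<forall>e<d-1. (\<Sum>i<C. a i * y i ^ d * \<tau> i ^ e) = 0"
      and nz: "(\<Sum>i<C. a i * y i ^ d * \<tau> i ^ (d-1)) \<noteq> 0" using HC by blast
    define m where "m e = (\<Sum>i<C. a i * y i ^ d * \<tau> i ^ e)" for e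
    define lam where "lam = (1 - m d) / (of_nat d * m (d-1))"
    define x where "x i = (if i < C then y i * (\<tau> i + lam) else 0)" for i
    have "(\<Sum>i<n. a i * x i ^ d) = (\<Sum>i<C. a i * x i ^ d) + (\<Sum>i\<in>{C..<n}. a i * x i ^ d)"
      using n by (simp add: lessThan_atLeast0 sum.atLeastLessThan_concat)
    also have "(\<Sum>i\<in>{C..<n}. a i * x i ^ d) = 0"
      using d' by (intro sum.neutral) (auto simp: x_def)
    also have "(\<Sum>i<C. a i * x i ^ d) = (\<Sum>i<C. \<Sum>e\<le>d. of_nat (d choose e) * lam ^ (d-e) * (a i * y i ^ d * \<tau> i ^ e))"
    proof (intro sum.cong refl)
      fix i assume "i \<in> {..<C}"
      then have "a i * x i ^ d = a i * y i ^ d * (\<tau> i + lam) ^ d" by (simp add: x_def power_mult_distrib)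
      also have "\<dots> = a i * y i ^ d * (\<Sum>e\<le>d. of_nat (d choose e) * \<tau> i ^ e * lam ^ (d-e))"
        by (simp only: binomial_ring)
      also have "\<dots> = (\<Sum>e\<le>d. of_nat (d choose e) * lam ^ (d-e) * (a i * y i ^ d * \<tau> i ^ e))"
        by (simp add: sum_distrib_left algebra_simps)
      finally show "a i * x i ^ d = (\<Sum>e\<le>d. of_nat (d choose e) * lam ^ (d-e) * (a i * y i ^ d * \<tau> i ^ e))" .
    qed
    also have "\<dots> = (\<Sum>e\<le>d. of_nat (d choose e) * lam ^ (d-e) * m e)"
      unfolding m_def sum_distrib_left by (rule sum.swap)
    also have "\<dots> = (\<Sum>e<d'. of_nat (d choose e) * lam ^ (d-e) * m e) + of_nat d * lam * m d' + m d"
      unfolding d' by (simp add: atMost_Suc lessThan_Suc_atMost[symmetric] del: lessThan_Suc_atMost)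
    also have "(\<Sum>e<d'. of_nat (d choose e) * lam ^ (d-e) * m e) = 0"
      using z d' unfolding m_def by (intro sum.neutral) auto
    also have "of_nat d * lam * m d' = 1 - m d"
      using nz dnz d' unfolding lam_def m_def by simp
    finally show "\<exists>x::nat \<Rightarrow> 'k. (\<Sum>i<n. a i * x i ^ d) = 1" by auto
  qed
qed

end
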